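(* In the setting below, let $n>2$ be an integer and let $(x_f,y_f,\theta_f)$ be any goal pose. The minimum travel time over all $2n\pi$-arc $LSL$ and $RSR$ paths reaching this goal pose is not smaller than the minimum travel time over all $4\pi$-arc $LSL$ and $RSR$ paths reaching it. In other words, extending the ranges of $\alpha$ and $\gamma$ beyond $[0,4\pi)$ does not reduce the minimum travel time.
   Context: Setting: a vehicle moves in the plane at unit speed with minimum turning radius $r>0$, in a steady current $(w_x,w_y)$ with speed $v_w=\sqrt{w_x^2+w_y^2}\in(0,1)$. The start pose is $(0,0,0)$ and the goal pose is $(x_f,y_f,\theta_f)$ with $\theta_f\in[0,2\pi)$. An $LSL$ path has parameters $(\alpha,\beta,\gamma)$ with $\alpha,\gamma\ge0$ and $\beta\ge0$: a left arc of angle $\alpha$ of radius $r$, a straight segment of length $\beta$, and a left arc of angle $\gamma$, in the frame moving with the current. Its travel time is $T=r(\alpha+\gamma)+\beta$. It reaches the goal iff for some $k\in\mathbb{Z}$: $\alpha+\gamma=2k\pi+\theta_f$, $x_f-w_xT=r\sin\theta_f+\beta\cos\alpha$, and $y_f-w_yT=r(1-\cos\theta_f)+\beta\sin\alpha$. An $RSR$ path is the analogous path with right arcs, with $T=r(\alpha+\gamma)+\beta$. It reaches the goal iff for some $k\in\mathbb{Z}$: $-\alpha-\gamma=2k\pi+\theta_f$, $x_f-w_xT=-r\sin\theta_f+\beta\cos\alpha$, and $y_f-w_yT=-r(1-\cos\theta_f)-\beta\sin\alpha$. For a positive integer $m$, a path is a $2m\pi$-arc path if $\alpha,\gamma\in[0,2m\pi)$.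 In particular, $4\pi$-arc paths are the case $m=2$. *)

theory Defs
  imports Complex_Main
begin

datatype path_type = LSL | RSR

definition travel_time :: "real \<Rightarrow> real \<Rightarrow> real \<Rightarrow> real \<Rightarrow> real" where
  "travel_time r \<alpha> \<beta> \<gamma> = r * (\<alpha> + \<gamma>) + \<beta>"

text \<open>A path of type LSL or RSR with parameters (alpha, beta, gamma), radius r, in the current
  (wx, wy), starting at pose (0,0,0), reaches the goal pose (xf, yf, thf).\<close>
definition reaches ::
  "path_type \<Rightarrow> real \<Rightarrow> real \<Rightarrow> real \<Rightarrow> real \<Rightarrow> real \<Rightarrow> real \<Rightarrow> real \<Rightarrow> real \<Rightarrow> real \<Rightarrow> bool" where
  "reaches pt r wx wy xf yf thf \<alpha> \<beta> \<gamma> \<longleftrightarrow>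
     \<alpha> \<ge> 0 \<and> \<beta> \<ge> 0 \<and> \<gamma> \<ge> 0 \<and>
     (let T = travel_time r \<alpha> \<beta> \<gamma> in
      (case pt of
         LSL \<Rightarrow> (\<exists>k::int. \<alpha> + \<gamma> = 2 * of_int k * pi + thf) \<and>
                xf - wx * T = r * sin thf + \<beta> * cos \<alpha> \<and>
                yf - wy * T = r * (1 - cos thf) + \<beta> * sin \<alpha>
       | RSR \<Rightarrow> (\<exists>k::int. - \<alpha> - \<gamma> = 2 * of_int k * pi + thf) \<and>
                xf - wx * T = - r * sin thf + \<beta> * cos \<alpha> \<and>
                yf - wy * T = - r * (1 - cos thf) - \<beta> * sin \<alpha>))"

definition arc_bounded :: "nat \<Rightarrow> real \<Rightarrow> real \<Rightarrow> bool" where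
  "arc_bounded m \<alpha> \<gamma> \<longleftrightarrow> 0 \<le> \<alpha> \<and> \<alpha> < 2 * real m * pi \<and> 0 \<le> \<gamma> \<and> \<gamma> < 2 * real m * pi"

end

theory Submission
  imports Defs
begin

lemma polar_ex:
  fixes u v :: real
  shows "\<exists>t. 0 \<le> t \<and> t < 2*pi \<and> u = sqrt (u\<^sup>2 + v\<^sup>2) * cos t \<and> v = sqrt (u\<^sup>2 + v\<^sup>2) * sin t"
proof (cases "u\<^sup>2 + v\<^sup>2 = 0")
  case True
  then have "u = 0" "v = 0" by (auto simp: sum_power2_eq_zero_iff)
  then show ?thesis by (intro exI[of _ 0]) auto
next
  case False
  define s where "s = sqrt (u\<^sup>2 + v\<^sup>2)"
  have "u\<^sup>2 + v\<^sup>2 \<ge> 0" by simp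
  then have "u\<^sup>2 + v\<^sup>2 > 0" using False by linarith
  then have sp: "s > 0" using s_def by simp
  have s2: "s\<^sup>2 = u\<^sup>2 + v\<^sup>2" unfolding s_def by (simp add: add_nonneg_nonneg)
  have "(u/s)\<^sup>2 + (v/s)\<^sup>2 = (u\<^sup>2 + v\<^sup>2)/s\<^sup>2" by (simp add: power_divide add_divide_distrib)
  also have "\<dots> = 1" unfolding s2[symmetric] using sp by simp
  finally have "(u/s)\<^sup>2 + (v/s)\<^sup>2 = 1" .
  then obtain t where t: "0 \<le> t" "t < 2*pi" "u/s = cos t" "v/s = sin t"
    by (rule sincos_total_2pi)
  have "u = s*cos t" "v = s*sin t" using t(3,4) sp by (auto simp: field_simps)
  then show ?thesis using t(1,2) unfolding s_def by blast
qed

lemma core: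
  fixes r a b wx wy S S' \<alpha> \<beta> :: real
  assumes r: "r > 0" and b0: "\<beta> \<ge> 0"
    and e1: "a - wx * (r*S+\<beta>) = \<beta> * cos \<alpha>"
    and e2: "b - wy * (r*S+\<beta>) = \<beta> * sin \<alpha>"
    and s1: "2*pi \<le> S'" and s2: "S' < 4*pi" and s3: "S' \<le> S"
  shows "\<exists>\<alpha>' \<beta>' \<gamma>'. \<alpha>' \<ge> 0 \<and> \<beta>' \<ge> 0 \<and> \<gamma>' \<ge> 0 \<and> \<alpha>' + \<gamma>' = S' \<and> \<alpha>' < 4*pi \<and> \<gamma>' < 4*pi \<and>
     a - wx * (r*S'+\<beta>') = \<beta>' * cos \<alpha>' \<and> b - wy * (r*S'+\<beta>') = \<beta>' * sin \<alpha>' \<and>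
     r*S'+\<beta>' \<le> r*S+\<beta>"
proof -
  define f where "f = (\<lambda>T. T - sqrt ((a - wx*T)\<^sup>2 + (b - wy*T)\<^sup>2))"
  define T where "T = r*S+\<beta>"
  have q1: "a - wx*T = \<beta>*cos \<alpha>" using e1 T_def by simp
  have q2: "b - wy*T = \<beta>*sin \<alpha>" using e2 T_def by simp
  have "(a - wx*T)\<^sup>2 + (b - wy*T)\<^sup>2 = \<beta>\<^sup>2 * ((cos \<alpha>)\<^sup>2 + (sin \<alpha>)\<^sup>2)"
    unfolding q1 q2 power_mult_distrib distrib_left by (rule refl)
  moreover have "(cos \<alpha>)\<^sup>2 + (sin \<alpha>)\<^sup>2 = 1" by simp
  ultimately have "(a - wx*T)\<^sup>2 + (b - wy*T)\<^sup>2 = \<beta>\<^sup>2" by (metis mult_1_right)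
  then have fT: "f T = r*S" using b0 unfolding f_def T_def by simp
  have pi0: "pi > 0" by simp
  have S'0: "S' \<ge> 0" using s1 pi0 by linarith
  have "0 \<le> sqrt (a\<^sup>2 + b\<^sup>2)" by simp
  moreover have "0 \<le> r*S'" using r S'0 by simp
  moreover have "f 0 = - sqrt (a\<^sup>2 + b\<^sup>2)" unfolding f_def by simp
  ultimately have f0: "f 0 \<le> r*S'" by linarith
  have le: "r*S' \<le> f T" using fT s3 r by simp
  have "r*S \<ge> 0" using r s3 S'0 by simp
  then have T0: "0 \<le> T" using b0 unfolding T_def by linarith
  have cont: "continuous_on {0..T} f" unfolding f_def by (intro continuous_intros)
  obtain T' where T': "0 \<le> T'" "T' \<le> T" "f T' = r*S'"
    using IVT'[of f 0 "r*S'" T, OF f0 le T0 cont] by blast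
  define \<beta>' where "\<beta>' = sqrt ((a - wx*T')\<^sup>2 + (b - wy*T')\<^sup>2)"
  have TT: "T' = r*S' + \<beta>'" using T'(3) unfolding f_def \<beta>'_def by simp
  obtain t where t: "0 \<le> t" "t < 2*pi" "a - wx*T' = \<beta>' * cos t" "b - wy*T' = \<beta>' * sin t"
    using polar_ex[of "a - wx*T'" "b - wy*T'"] unfolding \<beta>'_def by (auto simp: mult.commute)
  show ?thesis
    apply (rule exI[of _ t], rule exI[of _ \<beta>'], rule exI[of _ "S' - t"])
    using t TT T' s1 s2 unfolding \<beta>'_def T_def by auto
qed

theorem theorem4:
  fixes r wx wy xf yf thf :: real and n :: nat
  assumes "r > 0"
    and "0 < sqrt (wx\<^sup>2 + wy\<^sup>2)" and "sqrt (wx\<^sup>2 + wy\<^sup>2) < 1"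
    and "0 \<le> thf" and "thf < 2 * pi"
    and "n > 2"
  shows "\<forall>pt \<alpha> \<beta> \<gamma>. reaches pt r wx wy xf yf thf \<alpha> \<beta> \<gamma> \<and> arc_bounded n \<alpha> \<gamma> \<longrightarrow>
           (\<exists>pt' \<alpha>' \<beta>' \<gamma>'. reaches pt' r wx wy xf yf thf \<alpha>' \<beta>' \<gamma>' \<and> arc_bounded 2 \<alpha>' \<gamma>' \<and>
              travel_time r \<alpha>' \<beta>' \<gamma>' \<le> travel_time r \<alpha> \<beta> \<gamma>)"
proof (intro allI impI)
  fix pt \<alpha> \<beta> \<gamma>
  assume H: "reaches pt r wx wy xf yf thf \<alpha> \<beta> \<gamma> \<and> arc_bounded n \<alpha> \<gamma>"
  then have R: "reaches pt r wx wy xf yf thf \<alpha> \<beta> \<gamma>" by blast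
  have nn: "\<alpha> \<ge> 0" "\<beta> \<ge> 0" "\<gamma> \<ge> 0" using R unfolding reaches_def by auto
  define S where "S = \<alpha> + \<gamma>"
  have pi0: "pi > 0" by simp
  show "\<exists>pt' \<alpha>' \<beta>' \<gamma>'. reaches pt' r wx wy xf yf thf \<alpha>' \<beta>' \<gamma>' \<and> arc_bounded 2 \<alpha>' \<gamma>' \<and>
              travel_time r \<alpha>' \<beta>' \<gamma>' \<le> travel_time r \<alpha> \<beta> \<gamma>"
  proof (cases "S < 4*pi")
    case True
    then have "arc_bounded 2 \<alpha> \<gamma>" using nn unfolding arc_bounded_def S_def by auto
    then show ?thesis using R by blast
  next
    case False
    define m where "m = \<lfloor>(S - 2*pi) / (2*pi)\<rfloor>"
    define S' where "S' = S - 2*pi*of_int m"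
    have m1: "of_int m \<le> (S - 2*pi) / (2*pi)" "(S - 2*pi) / (2*pi) < of_int m + 1"
      unfolding m_def by linarith+
    have "2*pi*of_int m \<le> S - 2*pi" using m1(1) pi0 by (simp add: field_simps)
    moreover have "S - 2*pi < 2*pi*(of_int m + 1)" using m1(2) pi0 by (simp add: field_simps)
    moreover have "(1::real) \<le> (S - 2*pi) / (2*pi)" using False pi0 by (simp add: field_simps)
    ultimately have s1: "2*pi \<le> S'" and s2: "S' < 4*pi" and s3: "S' \<le> S"
      using m1 unfolding S'_def by (auto simp: algebra_simps)
    show ?thesis
    proof (cases pt)
      case LSL
      obtain k :: int where k: "\<alpha> + \<gamma> = 2 * of_int k * pi + thf"
        and e1: "xf - wx * (r*S+\<beta>) = r * sin thf + \<beta> * cos \<alpha>"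
        and e2: "yf - wy * (r*S+\<beta>) = r * (1 - cos thf) + \<beta> * sin \<alpha>"
        using R LSL unfolding reaches_def travel_time_def S_def Let_def by auto
      obtain \<alpha>' \<beta>' \<gamma>' where P: "\<alpha>' \<ge> 0" "\<beta>' \<ge> 0" "\<gamma>' \<ge> 0" "\<alpha>' + \<gamma>' = S'" "\<alpha>' < 4*pi" "\<gamma>' < 4*pi"
        "(xf - r * sin thf) - wx * (r*S'+\<beta>') = \<beta>' * cos \<alpha>'"
        "(yf - r * (1 - cos thf)) - wy * (r*S'+\<beta>') = \<beta>' * sin \<alpha>'"
        "r*S'+\<beta>' \<le> r*S+\<beta>"
        using core[of r \<beta> "xf - r * sin thf" wx S \<alpha> "yf - r * (1 - cos thf)" wy S'] e1 e2 s1 s2 s3 assms(1) nn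
        by (auto simp: algebra_simps)
      have "\<alpha>' + \<gamma>' = 2 * of_int (k - m) * pi + thf"
        using P(4) k unfolding S'_def S_def by (simp add: algebra_simps)
      then have kk: "\<exists>k::int. \<alpha>' + \<gamma>' = 2 * of_int k * pi + thf" by blast
      have q7: "xf - wx * (r*(\<alpha>'+\<gamma>')+\<beta>') = r * sin thf + \<beta>' * cos \<alpha>'" unfolding P(4) using P(7) by (simp add: algebra_simps)
      have q8: "yf - wy * (r*(\<alpha>'+\<gamma>')+\<beta>') = r * (1 - cos thf) + \<beta>' * sin \<alpha>'" unfolding P(4) using P(8) by (simp add: algebra_simps)
      have "reaches LSL r wx wy xf yf thf \<alpha>' \<beta>' \<gamma>'"
        unfolding reaches_def travel_time_def Let_def using kk q7 q8 P(1-3) by simp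
      moreover have "arc_bounded 2 \<alpha>' \<gamma>'" using P unfolding arc_bounded_def by auto
      moreover have "travel_time r \<alpha>' \<beta>' \<gamma>' \<le> travel_time r \<alpha> \<beta> \<gamma>"
        using P unfolding travel_time_def S_def by simp
      ultimately show ?thesis by blast
    next
      case RSR
      obtain k :: int where k: "- \<alpha> - \<gamma> = 2 * of_int k * pi + thf"
        and e1: "xf - wx * (r*S+\<beta>) = - r * sin thf + \<beta> * cos \<alpha>"
        and e2: "yf - wy * (r*S+\<beta>) = - r * (1 - cos thf) - \<beta> * sin \<alpha>"
        using R RSR unfolding reaches_def travel_time_def S_def Let_def by auto
      obtain \<alpha>' \<beta>' \<gamma>' where P: "\<alpha>' \<ge> 0" "\<beta>' \<ge> 0" "\<gamma>' \<ge> 0" "\<alpha>' + \<gamma>' = S'" "\<alpha>' < 4*pi" "\<gamma>' < 4*pi"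
        "(xf + r * sin thf) - wx * (r*S'+\<beta>') = \<beta>' * cos \<alpha>'"
        "(- yf - r * (1 - cos thf)) - (- wy) * (r*S'+\<beta>') = \<beta>' * sin \<alpha>'"
        "r*S'+\<beta>' \<le> r*S+\<beta>"
        using core[of r \<beta> "xf + r * sin thf" wx S \<alpha> "- yf - r * (1 - cos thf)" "- wy" S'] e1 e2 s1 s2 s3 assms(1) nn
        by (auto simp: algebra_simps)
      have "- \<alpha>' - \<gamma>' = 2 * of_int (k + m) * pi + thf"
        using P(4) k unfolding S'_def S_def by (simp add: algebra_simps)
      then have kk: "\<exists>k::int. - \<alpha>' - \<gamma>' = 2 * of_int k * pi + thf" by blast
      have q7: "xf - wx * (r*(\<alpha>'+\<gamma>')+\<beta>') = - r * sin thf + \<beta>' * cos \<alpha>'" unfolding P(4) using P(7) by (simp add: algebra_simps)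
      have q8: "yf - wy * (r*(\<alpha>'+\<gamma>')+\<beta>') = - r * (1 - cos thf) - \<beta>' * sin \<alpha>'" unfolding P(4) using P(8) by (simp add: algebra_simps)
      have "reaches RSR r wx wy xf yf thf \<alpha>' \<beta>' \<gamma>'"
        unfolding reaches_def travel_time_def Let_def using kk q7 q8 P(1-3) by simp
      moreover have "arc_bounded 2 \<alpha>' \<gamma>'" using P unfolding arc_bounded_def by auto
      moreover have "travel_time r \<alpha>' \<beta>' \<gamma>' \<le> travel_time r \<alpha> \<beta> \<gamma>"
        using P unfolding travel_time_def S_def by simp
      ultimately show ?thesis by blast
    qed
  qed
qed

end
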